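(* Let $n>1$ be an integer. Then $$\sum_{k=0}^{n-1}(3k+1)(-16)^{n-k-1}\binom{2k}{k} f_k \equiv 0 \pmod{n\binom{2n}{n}},$$ i.e. the integer on the left is divisible by $n\binom{2n}{n}$.
   Context: The Franel numbers are defined by $f_n=\sum_{k=0}^n \binom{n}{k}^3$ for integers $n\ge 0$. *)

theory Defs
  imports Main
begin

definition franel :: "nat \<Rightarrow> nat" where
  "franel n = (\<Sum>k=0..n. (n choose k) ^ 3)"

end

theory Submission
  imports Defs Complex_Main
begin


definition PA :: "real \<Rightarrow> real \<Rightarrow> real" where
 "PA n k = 4*k^3-30*k^2+78*k-72+n*(93*k-18*k^2-128)+n^2*(27*k-74)-14*n^3"

lemma polyA: "-8*(n+1-k)^3*(n+2-k)^3 - (7*n^2+21*n+16)*(n+1)*(n+2-k)^3 + (n+1)*(n+2)^5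
   = (n+2-k)^3*PA n (k+1) - k^3*PA n k"
  unfolding PA_def by algebra

lemma algA:
  fixes n k c x1 x2 y :: real
  assumes "1 \<le> k" "k \<le> n" "x1*(n+1-k) = (n+1)*c" "x2*(n+2-k) = (n+2)*x1" "x1*k = y*(n+2-k)"
  shows "-8*(n+1)^2*c^3 - (7*n^2+21*n+16)*x1^3 + (n+2)^2*x2^3 = x1^3 * PA n (k+1)/(n+1) - y^3*PA n k/(n+1)"
proof -
  define u where "u = n+1-k"
  define v where "v = n+2-k"
  have u0: "u \<noteq> 0" "v \<noteq> 0" "n+1 \<noteq> 0" using assms by (auto simp: u_def v_def)
  have h1: "c = x1*u/(n+1)" using assms u0 by (simp add: field_simps u_def)
  have h2: "x2 = (n+2)*x1/v" using assms u0 by (simp add: field_simps v_def)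
  have h3: "y = x1*k/v" using assms u0 by (simp add: field_simps v_def)
  have p: "-8*u^3*v^3 - (7*n^2+21*n+16)*(n+1)*v^3 + (n+1)*(n+2)^5
   = v^3*PA n (k+1) - k^3*PA n k" using polyA[of n k] by (simp add: u_def v_def)
  define w where "w = n+1"
  have w0: "w \<noteq> 0" using u0 by (simp add: w_def)
  have h1': "c = x1*u/w" using h1 by (simp add: w_def)
  have p': "-8*u^3*v^3 - (7*n^2+21*n+16)*w*v^3 + w*(n+2)^5
   = v^3*PA n (k+1) - k^3*PA n k" using p by (simp add: w_def)
  have e1: "w^2*c^3 = x1^3*u^3/w" unfolding h1' using w0 by (simp add: field_simps power3_eq_cube power2_eq_square)
  have e2: "(n+2)^2*x2^3 = (n+2)^5*x1^3/v^3" unfolding h2 by (simp add: power_divide power_mult_distrib mult.assoc flip: power_add)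
  have e3: "y^3 = x1^3*k^3/v^3" unfolding h3 using u0 by (simp add: field_simps power3_eq_cube power2_eq_square)
  have "(-8*w^2*c^3 - (7*n^2+21*n+16)*x1^3 + (n+2)^2*x2^3) = x1^3 * (-8*u^3*v^3 - (7*n^2+21*n+16)*w*v^3 + w*(n+2)^5)/(w*v^3)"
    using e1 e2 u0 w0 by (simp add: field_simps)
  also have "\<dots> = x1^3 * PA n (k+1)/w - y^3*PA n k/w"
    unfolding p' e3 using u0 w0 by (simp add: field_simps)
  finally show ?thesis by (simp add: w_def)
qed

lemma dh: "(w::real) \<noteq> 0 \<Longrightarrow> A*w = B - C \<Longrightarrow> A = B/w - C/w"
  by (simp add: field_simps)
lemma dh1: "(w::real) \<noteq> 0 \<Longrightarrow> A*w = - B \<Longrightarrow> A = - B/w"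
  by (simp add: field_simps)

definition GA :: "nat \<Rightarrow> nat \<Rightarrow> real" where
 "GA n k = (if k = 0 then 0 else real (Suc n choose (k-1))^3 * PA (real n) (real k) / (real n + 1))"

lemma choose_step_nat: "(N choose Suc i) * Suc i = (N choose i) * (N - i)"
proof -
  have "Suc i * (N choose Suc i) = N * ((N - 1) choose i)" by (rule binomial_absorption)
  moreover have "(N - i) * (N choose i) = N * ((N - 1) choose i)" by (rule binomial_absorb_comp)
  ultimately show ?thesis by (simp add: mult.commute)
qed



lemma ptA: "-8*(real n+1)^2*real (n choose k)^3 - (7*real n^2+21*real n+16)*real (Suc n choose k)^3
   + (real n+2)^2*real (Suc (Suc n) choose k)^3 = GA n (Suc k) - GA n k"
proof -
  consider "k = 0" | "1 \<le> k \<and> k \<le> n" | "k = n+1" | "k = n+2" | "k \<ge> n+3" by linarith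
  then show ?thesis
  proof cases
    case 1
    then show ?thesis unfolding GA_def PA_def
      by (simp add: field_simps) (simp add: algebra_simps power2_eq_square power3_eq_cube)
  next
    case 2
    then obtain i where ki: "k = Suc i" and kn: "k \<le> n" by (cases k) auto
    have R1: "(Suc n choose k) * (Suc n - k) = Suc n * (n choose k)"
      using binomial_absorb_comp[of "Suc n" k] by (simp add: mult.commute)
    have R2: "(Suc (Suc n) choose k) * (Suc (Suc n) - k) = Suc (Suc n) * (Suc n choose k)"
      using binomial_absorb_comp[of "Suc (Suc n)" k] by (simp add: mult.commute)
    have R3: "(Suc n choose k) * k = (Suc n choose (k-1)) * (Suc n - (k-1))"
      using choose_step_nat[of "Suc n" i] ki by simp
    have d1: "real (Suc n - k) = real n + 1 - real k" using kn by (simp add: of_nat_diff)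
    have d2: "real (Suc (Suc n) - k) = real n + 2 - real k" using kn by (simp add: of_nat_diff)
    have d3: "real (Suc n - (k-1)) = real n + 2 - real k" using kn ki by (simp add: of_nat_diff)
    have R1': "real (Suc n choose k) * (real n + 1 - real k) = (real n + 1) * real (n choose k)"
    proof -
      have "real ((Suc n choose k) * (Suc n - k)) = real (Suc n * (n choose k))" by (simp only: R1)
      thus ?thesis unfolding of_nat_mult d1 by simp
    qed
    have R2': "real (Suc (Suc n) choose k) * (real n + 2 - real k) = (real n + 2) * real (Suc n choose k)"
    proof -
      have "real ((Suc (Suc n) choose k) * (Suc (Suc n) - k)) = real (Suc (Suc n) * (Suc n choose k))" by (simp only: R2)
      thus ?thesis unfolding of_nat_mult d2 by simp
    qed
    have R3': "real (Suc n choose k) * real k = real (Suc n choose (k-1)) * (real n + 2 - real k)"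
    proof -
      have "real ((Suc n choose k) * k) = real ((Suc n choose (k-1)) * (Suc n - (k-1)))" by (simp only: R3)
      thus ?thesis unfolding of_nat_mult d3 by simp
    qed
    have "-8*(real n+1)^2*real (n choose k)^3 - (7*real n^2+21*real n+16)*real (Suc n choose k)^3
   + (real n+2)^2*real (Suc (Suc n) choose k)^3 =
     real (Suc n choose k)^3 * PA n (real k+1)/(real n+1) - real (Suc n choose (k-1))^3*PA n k/(real n+1)"
      by (rule algA) (use 2 R1' R2' R3' in \<open>auto simp: algebra_simps\<close>)
    then show ?thesis unfolding GA_def using ki by simp
  next
    case 3
    have e: "n choose k = 0" "Suc n choose k = 1" "Suc (Suc n) choose k = Suc (Suc n)" "Suc n choose (Suc k - 1) = 1"
       "Suc n choose (k - 1) = Suc n"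
      using 3 by (auto simp: binomial_eq_0)
    have pm: "((real n+2)^2*(real n+2)^3 - (7*real n^2+21*real n+16))*(real n+1) = PA n (real n + 2) - (real n+1)^3*PA n (real n+1)"
      unfolding PA_def by algebra
    have nz: "real n + 1 \<noteq> 0" by simp
    have p: "(real n+2)^2*(real n+2)^3 - (7*real n^2+21*real n+16) = PA n (real n + 2)/(real n+1) - (real n+1)^3*PA n (real n+1)/(real n+1)"
      using dh[OF nz pm] .
    show ?thesis unfolding GA_def e using 3 p by (simp add: algebra_simps)
  next
    case 4
    have e: "n choose k = 0" "Suc n choose k = 0" "Suc (Suc n) choose k = 1"
       "Suc n choose (k - 1) = 1" "Suc n choose (Suc k - 1) = 0"
      using 4 by (auto simp: binomial_eq_0)
    have pm: "(real n+2)^2*(real n+1) = - PA n (real n+2)"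
      unfolding PA_def by algebra
    have nz: "real n + 1 \<noteq> 0" by simp
    have p: "(real n+2)^2 = - PA n (real n+2)/(real n+1)"
      using dh1[OF nz pm] .
    show ?thesis unfolding GA_def e using 4 p by (simp add: algebra_simps)
  next
    case 5
    have e: "n choose k = 0" "Suc n choose k = 0" "Suc (Suc n) choose k = 0"
       "Suc n choose (k - 1) = 0" "Suc n choose (Suc k - 1) = 0"
      using 5 by (auto simp: binomial_eq_0)
    show ?thesis unfolding GA_def e using 5 by simp
  qed
qed

lemma sum_ext_choose3: "m \<le> N \<Longrightarrow> (\<Sum>k=0..N. real (m choose k)^3) = (\<Sum>k=0..m. real (m choose k)^3)"
  by (rule sum.mono_neutral_right) (auto simp: binomial_eq_0)

definition fr :: "nat \<Rightarrow> real" where "fr m = (\<Sum>k=0..m. real (m choose k)^3)"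

lemma fr_rec: "(real n+2)^2 * fr (n+2) = (7*real n^2+21*real n+16) * fr (n+1) + 8*(real n+1)^2 * fr n"
proof -
  have "(\<Sum>k=0..n+2. -8*(real n+1)^2*real (n choose k)^3 - (7*real n^2+21*real n+16)*real (Suc n choose k)^3
   + (real n+2)^2*real (Suc (Suc n) choose k)^3) = (\<Sum>k=0..n+2. GA n (Suc k) - GA n k)"
    using ptA by (intro sum.cong) auto
  also have "\<dots> = GA n (Suc (n+2)) - GA n 0" by (rule sum_Suc_diff) simp
  also have "\<dots> = 0" by (simp add: GA_def binomial_eq_0)
  finally have "(\<Sum>k=0..n+2. -8*(real n+1)^2*real (n choose k)^3 - (7*real n^2+21*real n+16)*real (Suc n choose k)^3
   + (real n+2)^2*real (Suc (Suc n) choose k)^3) = 0" .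
  hence "-8*(real n+1)^2*(\<Sum>k=0..n+2. real (n choose k)^3) - (7*real n^2+21*real n+16)*(\<Sum>k=0..n+2. real (Suc n choose k)^3)
   + (real n+2)^2*(\<Sum>k=0..n+2. real (Suc (Suc n) choose k)^3) = 0"
    by (simp only: sum.distrib sum_subtractf flip: sum_distrib_left)
  moreover have "(\<Sum>k=0..n+2. real (n choose k)^3) = fr n" unfolding fr_def by (rule sum_ext_choose3) simp
  moreover have "(\<Sum>k=0..n+2. real (Suc n choose k)^3) = fr (n+1)" unfolding fr_def using sum_ext_choose3[of "Suc n" "n+2"] by simp
  moreover have "(\<Sum>k=0..n+2. real (Suc (Suc n) choose k)^3) = fr (n+2)" unfolding fr_def by simp
  ultimately have "-8*(real n+1)^2*fr n - (7*real n^2+21*real n+16)*fr (n+1) + (real n+2)^2*fr (n+2) = 0"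
    by simp
  thus ?thesis by algebra
qed


definition PB :: "real \<Rightarrow> real \<Rightarrow> real" where "PB n k = 12*(10*k+5*n+6*n*k+3*n^2)"

lemma polyB: "(-1/4)*(-8*(n+1)^2*(n+1-k)*(n+2*k)*(n+2-k)+4*(7*n^2+21*n+16)*((n+1+2*k)*(n+2*k)*(n+2-k))
   +16*(n+2)^2*(n+2+2*k)*(n+1+2*k)*(n+2*k))
   = (-1/4)*((n+1+2*k)*(n+2*k)*(n+2-k))*PB n (k+1) - k^3*PB n k"
  unfolding PB_def by algebra

lemma algB:
  fixes n k c x1 x2 y qk qk1 :: real
  assumes "1 \<le> k" "k \<le> n+1" "x1*(n+1-k) = (n+1+2*k)*c" "x2*(n+2-k) = (n+2+2*k)*x1"
     "x1*k^3 = y*((n+1+2*k)*(n+2*k)*(n+2-k))" "qk = (-1/4)*qk1"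
  shows "-8*(n+1)^2*(c*qk) + 4*(7*n^2+21*n+16)*(x1*qk) + 16*(n+2)^2*(x2*qk)
     = x1*qk*PB n (k+1) - y*qk1*PB n k"
proof -
  define D where "D = (n+1+2*k)*(n+2*k)*(n+2-k)"
  have nz: "n+1+2*k \<noteq> 0" "n+2*k \<noteq> 0" "n+2-k \<noteq> 0" using assms by auto
  have D0: "D \<noteq> 0" using nz by (simp add: D_def)
  have e1: "c*D = x1*((n+1-k)*(n+2*k)*(n+2-k))" using assms(3) unfolding D_def by algebra
  have e2: "x2*D = x1*((n+2+2*k)*(n+1+2*k)*(n+2*k))" using assms(4) unfolding D_def by algebra
  have e3: "y*D = x1*k^3" using assms(5) by (simp add: D_def)
  have p: "(-1/4)*(-8*(n+1)^2*((n+1-k)*(n+2*k)*(n+2-k))+4*(7*n^2+21*n+16)*D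
   +16*(n+2)^2*((n+2+2*k)*(n+1+2*k)*(n+2*k)))
   = (-1/4)*D*PB n (k+1) - k^3*PB n k"
    using polyB[of n k] by (simp add: D_def algebra_simps)
  have "(-8*(n+1)^2*(c*qk) + 4*(7*n^2+21*n+16)*(x1*qk) + 16*(n+2)^2*(x2*qk))*D
     = (x1*qk*PB n (k+1) - y*qk1*PB n k)*D"
  proof -
    have "(-8*(n+1)^2*(c*qk) + 4*(7*n^2+21*n+16)*(x1*qk) + 16*(n+2)^2*(x2*qk))*D
       = qk1*x1*((-1/4)*(-8*(n+1)^2*((n+1-k)*(n+2*k)*(n+2-k))+4*(7*n^2+21*n+16)*D
   +16*(n+2)^2*((n+2+2*k)*(n+1+2*k)*(n+2*k))))"
      using e1 e2 assms(6) by algebra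
    also have "\<dots> = qk1*x1*((-1/4)*D*PB n (k+1) - k^3*PB n k)" by (simp only: p)
    also have "\<dots> = (x1*qk*PB n (k+1) - y*qk1*PB n k)*D"
      using e3 assms(6) by algebra
    finally show ?thesis .
  qed
  thus ?thesis using D0 by simp
qed

definition M :: "nat \<Rightarrow> nat \<Rightarrow> nat" where
  "M n j = ((n+2*j) choose (3*j)) * ((2*j) choose j) * ((3*j) choose j)"

lemma Mfact: assumes "j \<le> n" shows "real (M n j) = fact (n+2*j) / (fact (n-j) * fact j ^ 3)"
proof -
  have a: "real ((n+2*j) choose (3*j)) = fact (n+2*j) / (fact (3*j) * fact (n-j))"
    using binomial_fact[of "3*j" "n+2*j"] assms by (simp add: numeral_3_eq_3)
  have b: "real ((2*j) choose j) = fact (2*j) / (fact j * fact j)"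
    using binomial_fact[of j "2*j"] by (simp add: mult_2)
  have c: "real ((3*j) choose j) = fact (3*j) / (fact j * fact (2*j))"
    using binomial_fact[of j "3*j"] by (simp add: numeral_3_eq_3 mult_2)
  show ?thesis unfolding M_def of_nat_mult a b c by (simp add: field_simps power3_eq_cube)
qed

lemma M0: "n < j \<Longrightarrow> M n j = 0"
  unfolding M_def by (simp add: binomial_eq_0)

definition F2 :: "nat \<Rightarrow> nat \<Rightarrow> real" where "F2 n j = real (M n j) * (-1/4)^j"

definition GB :: "nat \<Rightarrow> nat \<Rightarrow> real" where
  "GB n k = (if k = 0 then 0 else F2 (n+1) (k-1) * PB n k)"

lemma relsB:
  assumes "k = Suc i" "n = k + m"
  shows "real (M (n+1) k)*(real n+1-real k) = (real n+1+2*real k)*real (M n k)"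
    "real (M (n+2) k)*(real n+2-real k) = (real n+2+2*real k)*real (M (n+1) k)"
    "real (M (n+1) k)*real k^3 = real (M (n+1) i)*((real n+1+2*real k)*(real n+2*real k)*(real n+2-real k))"
proof -
  have c: "real (M n k) = fact (n+2*k)/(fact m * fact k^3)" using Mfact[of k n] assms by simp
  have x1: "real (M (n+1) k) = fact (Suc (n+2*k))/(fact (Suc m) * fact k^3)" using Mfact[of k "n+1"] assms by simp
  have x2: "real (M (n+2) k) = fact (Suc (Suc (n+2*k)))/(fact (Suc (Suc m)) * fact k^3)" using Mfact[of k "n+2"] assms by simp
  have y: "real (M (n+1) i) = fact (n+1+2*i)/(fact (Suc (Suc m)) * fact i^3)" using Mfact[of i "n+1"] assms by simp
  have f1: "fact (n+2*k) = (real n + 2*real k) * (fact (n+1+2*i) :: real)"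
  proof -
    have "n+2*k = Suc (n+1+2*i)" using assms by simp
    thus ?thesis by (simp only: fact_Suc) (simp add: assms)
  qed
  have fk: "fact k = real k * (fact i :: real)" using assms by (simp add: fact_Suc)
  define B where "B = (fact (n+2*k) :: real)"
  define Fm where "Fm = (fact m :: real)"
  define K3 where "K3 = (fact k ^ 3 :: real)"
  define m1 where "m1 = real m + 1"
  define m2 where "m2 = real m + 2"
  have nzB: "B \<noteq> 0" "Fm \<noteq> 0" "K3 \<noteq> 0" "m1 \<noteq> 0" "m2 \<noteq> 0"
    by (simp_all add: B_def Fm_def K3_def m1_def m2_def)
  have c': "real (M n k) = B/(Fm*K3)" unfolding c B_def Fm_def K3_def ..
  have x1': "real (M (n+1) k) = (real n+2*real k+1)*B/(m1*Fm*K3)"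
    unfolding x1 fact_Suc B_def Fm_def K3_def m1_def by (simp add: algebra_simps)
  have x2': "real (M (n+2) k) = (real n+2*real k+2)*((real n+2*real k+1)*B)/(m2*(m1*Fm)*K3)"
    unfolding x2 fact_Suc B_def Fm_def K3_def m1_def m2_def by (simp add: algebra_simps)
  have hm1: "real n + 1 - real k = m1" "real n + 2 - real k = m2" using assms by (simp_all add: m1_def m2_def)
  show "real (M (n+1) k)*(real n+1-real k) = (real n+1+2*real k)*real (M n k)"
    unfolding c' x1' hm1 using nzB by (simp add: field_simps)
  show "real (M (n+2) k)*(real n+2-real k) = (real n+2+2*real k)*real (M (n+1) k)"
    unfolding x2' x1' hm1 using nzB by (simp add: field_simps)
  show "real (M (n+1) k)*real k^3 = real (M (n+1) i)*((real n+1+2*real k)*(real n+2*real k)*(real n+2-real k))"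
  proof -
    define A where "A = (fact (n+1+2*i) :: real)"
    define Fi where "Fi = (fact i :: real)"
    have nz: "A \<noteq> 0" "Fi \<noteq> 0" by (simp_all add: A_def Fm_def Fi_def)
    have x1'': "real (M (n+1) k) = (real n+2*real k+1)*((real n+2*real k)*A)/(m1*Fm*(real k*Fi)^3)"
      unfolding x1 fact_Suc fk f1 A_def Fm_def Fi_def m1_def by (simp add: algebra_simps)
    have y': "real (M (n+1) i) = A/(m2*(m1*Fm)*Fi^3)"
      unfolding y fact_Suc A_def Fm_def Fi_def m1_def m2_def by (simp add: algebra_simps)
    have hm: "real n + 2 - real k = m2" using assms by (simp add: m2_def)
    have k0: "real k \<noteq> 0" using assms by simp
    show ?thesis unfolding x1'' y' hm using nz nzB k0 by (simp add: field_simps)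
  qed
qed

lemma relsB_last:
  assumes "k = Suc n"
  shows "real (M (n+2) k)*(real n+2-real k) = (real n+2+2*real k)*real (M (n+1) k)"
    "real (M (n+1) k)*real k^3 = real (M (n+1) n)*((real n+1+2*real k)*(real n+2*real k)*(real n+2-real k))"
proof -
  define A where "A = (fact (3*n+1) :: real)"
  define Fn where "Fn = (fact n :: real)"
  have nz: "A \<noteq> 0" "Fn \<noteq> 0" by (simp_all add: A_def Fn_def)
  have y: "real (M (n+1) n) = A / Fn^3" using Mfact[of n "n+1"] by (simp add: A_def Fn_def)
  have x1: "real (M (n+1) k) = (3*real n+3)*((3*real n+2)*A) / ((real n+1)*Fn)^3"
    using Mfact[of k "n+1"] assms
    by (simp add: A_def Fn_def numeral_3_eq_3 fact_Suc algebra_simps)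
  have x2: "real (M (n+2) k) = (3*real n+4)*((3*real n+3)*((3*real n+2)*A)) / ((real n+1)*Fn)^3"
    using Mfact[of k "n+2"] assms
    by (simp add: A_def Fn_def numeral_3_eq_3 fact_Suc algebra_simps)
  define W where "W = ((real n+1)*Fn)^3"
  have W0: "W \<noteq> 0" using nz by (simp add: W_def)
  have x1w: "real (M (n+1) k) * W = (3*real n+3)*((3*real n+2)*A)" unfolding x1 W_def using W0 W_def by simp
  have x2w: "real (M (n+2) k) * W = (3*real n+4)*((3*real n+3)*((3*real n+2)*A))" unfolding x2 W_def using W0 W_def by simp
  have yw: "real (M (n+1) n) * W = (real n+1)^3*A" unfolding y W_def using nz by (simp add: power_mult_distrib)
  have kk: "real k = real n + 1" using assms by simp
  show "real (M (n+2) k)*(real n+2-real k) = (real n+2+2*real k)*real (M (n+1) k)"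
  proof -
    have "(real (M (n+2) k)*(real n+2-real k)) * W = ((real n+2+2*real k)*real (M (n+1) k)) * W"
      unfolding kk using x1w x2w by algebra
    thus ?thesis using W0 by simp
  qed
  show "real (M (n+1) k)*real k^3 = real (M (n+1) n)*((real n+1+2*real k)*(real n+2*real k)*(real n+2-real k))"
  proof -
    have "(real (M (n+1) k)*real k^3) * W = (real (M (n+1) n)*((real n+1+2*real k)*(real n+2*real k)*(real n+2-real k))) * W"
      unfolding kk using x1w yw by algebra
    thus ?thesis using W0 by simp
  qed
qed

lemma algB_last: "X * (n + 2) ^ 3 = Y * ((3 * n + 6) * (3 * n + 5) * (3 * n + 4)) \<Longrightarrow>
  16 * (n + 2)^2 * (X * (- 1 / 4 * r)) * (n + 2) = - (Y * r * (12 * (10 * (n + 2) + 5 * n + 6 * n * (n + 2) + 3*n^2))) * (n+2)"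
  for X Y r n :: real
  by algebra

lemma Mdiag: "real (M N N) = fact (3*N) / fact N ^ 3"
  using Mfact[of N N] by (simp add: numeral_3_eq_3)

lemma ptB: "-8*(real n+1)^2*F2 n k + 4*(7*real n^2+21*real n+16)*F2 (n+1) k + 16*(real n+2)^2*F2 (n+2) k
   = GB n (Suc k) - GB n k"
proof -
  consider "k = 0" | "1 \<le> k \<and> k \<le> n+1" | "k = n+2" | "k \<ge> n+3" by linarith
  then show ?thesis
  proof cases
    case 1
    have m: "M a 0 = 1" for a unfolding M_def by simp
    show ?thesis unfolding 1 GB_def F2_def PB_def by (simp add: m) algebra
  next
    case 2
    then obtain i where ki: "k = Suc i" and kn: "k \<le> n+1" by (cases k) auto
    have R: "real (M (n+1) k)*(real n+1-real k) = (real n+1+2*real k)*real (M n k) \<and>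
      real (M (n+2) k)*(real n+2-real k) = (real n+2+2*real k)*real (M (n+1) k) \<and>
      real (M (n+1) k)*real k^3 = real (M (n+1) i)*((real n+1+2*real k)*(real n+2*real k)*(real n+2-real k))"
    proof (cases "k \<le> n")
      case True
      then obtain m where "n = k + m" using le_Suc_ex by blast
      from relsB[OF ki this] show ?thesis by simp
    next
      case False
      hence kk: "k = Suc n" using kn by simp
      hence ii: "i = n" using ki by simp
      have "M n k = 0" using kk by (simp add: M0)
      with relsB_last[OF kk] kk ii show ?thesis by simp
    qed
    have "-8*(real n+1)^2*(real (M n k)*(-1/4)^k) + 4*(7*real n^2+21*real n+16)*(real (M (n+1) k)*(-1/4)^k)
       + 16*(real n+2)^2*(real (M (n+2) k)*(-1/4)^k)
     = real (M (n+1) k)*(-1/4)^k*PB n (real k+1) - real (M (n+1) i)*(-1/4)^i*PB n k"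
      by (rule algB) (use 2 R ki in auto)
    then show ?thesis unfolding GB_def F2_def using ki by (simp add: algebra_simps)
  next
    case 3
    have z: "M n k = 0" "M (n+1) k = 0" "M (n+1) (Suc k - 1) = 0" using 3 by (simp_all add: M0)
    have d: "real (M (n+2) k) * (real n+2)^3 = real (M (n+1) (n+1)) * ((3*real n+6)*(3*real n+5)*(3*real n+4))"
    proof -
      have e: "3*(n+2) = 3*n+6" by simp
      have a: "real (M (n+2) k) = fact (3*n+6) / fact (n+2)^3" using Mdiag[of "n+2"] 3 unfolding e by (simp only: 3)
      have e': "3*(n+1) = 3*n+3" by simp
      have b: "real (M (n+1) (n+1)) = fact (3*n+3) / fact (n+1)^3" using Mdiag[of "n+1"] unfolding e' .
      define A where "A = (fact (3*n+3) :: real)"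
      define Fn where "Fn = (fact (n+1) :: real)"
      have nz: "A \<noteq> 0" "Fn \<noteq> 0" by (simp_all add: A_def Fn_def)
      have a': "real (M (n+2) k) = (3*real n+6)*((3*real n+5)*((3*real n+4)*A)) / ((real n+2)*Fn)^3"
      proof -
        have s1: "3*n+6 = Suc (Suc (Suc (3*n+3)))" "n+2 = Suc (n+1)" by simp_all
        have "(fact (3*n+6)::real) = (3*real n+6)*((3*real n+5)*((3*real n+4)*A))"
          unfolding s1 A_def fact_Suc by (simp add: algebra_simps)
        moreover have "(fact (n+2)::real) = (real n+2)*Fn" unfolding s1 Fn_def fact_Suc by (simp add: algebra_simps)
        ultimately show ?thesis unfolding a by (simp add: power_mult_distrib)
      qed
      have b': "real (M (n+1) (n+1)) = A / Fn^3" unfolding b A_def Fn_def ..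
      define N2 where "N2 = real n + 2"
      have N0: "N2 \<noteq> 0" unfolding N2_def by linarith
      show ?thesis unfolding a' b' N2_def[symmetric] using nz N0 by (simp add: field_simps)
    qed
    have km: "k - 1 = n + 1" using 3 by simp
    have p: "16*(real n+2)^2*(real (M (n+2) k)*(-1/4)^k) = - (real (M (n+1) (n+1))*(-1/4)^(n+1)*PB n k)"
    proof -
      have q: "((-1/4)::real)^k = (-1/4)*(-1/4)^(n+1)" using 3 by simp
      have N0: "real n + 2 \<noteq> 0" by linarith
      have kr: "real k = real n + 2" using 3 by simp
      have "16*(real n+2)^2*(real (M (n+2) k)*(-1/4)^k) * (real n+2) = - (real (M (n+1) (n+1))*(-1/4)^(n+1)*PB n k) * (real n + 2)"
        unfolding q PB_def kr using algB_last[OF d] .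
      thus ?thesis using N0 by simp
    qed
    show ?thesis unfolding GB_def F2_def z km using 3 p by simp
  next
    case 4
    have z: "M n k = 0" "M (n+1) k = 0" "M (n+2) k = 0" "M (n+1) (k - 1) = 0" "M (n+1) (Suc k - 1) = 0"
      using 4 by (simp_all add: M0)
    show ?thesis unfolding GB_def F2_def z using 4 by simp
  qed
qed

definition hR :: "nat \<Rightarrow> real" where "hR n = (\<Sum>j=0..n. real (M n j) * (-4)^(n-j))"

definition sF :: "nat \<Rightarrow> real" where "sF n = (\<Sum>j=0..n. F2 n j)"

lemma hR_sF: "hR n = (-4)^n * sF n"
  unfolding hR_def sF_def sum_distrib_left
proof (rule sum.cong)
  fix j assume "j \<in> {0..n}"
  hence jn: "j \<le> n" by simp
  have "((-4)::real)^n = (-4)^(n-j) * (-4)^j" using jn by (simp flip: power_add)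
  moreover have "((-4)::real)^j * (-1/4)^j = 1" by (simp flip: power_mult_distrib)
  ultimately show "real (M n j) * (-4) ^ (n - j) = (-4) ^ n * F2 n j"
    unfolding F2_def by (simp add: algebra_simps)
qed simp

lemma sF_ext: "m \<le> N \<Longrightarrow> (\<Sum>j=0..N. F2 m j) = sF m"
  unfolding sF_def by (rule sum.mono_neutral_right) (auto simp: F2_def M0)

lemma sF_rec: "-8*(real n+1)^2*sF n + 4*(7*real n^2+21*real n+16)*sF (n+1) + 16*(real n+2)^2*sF (n+2) = 0"
proof -
  have "(\<Sum>k=0..n+2. -8*(real n+1)^2*F2 n k + 4*(7*real n^2+21*real n+16)*F2 (n+1) k + 16*(real n+2)^2*F2 (n+2) k)
     = (\<Sum>k=0..n+2. GB n (Suc k) - GB n k)"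
    using ptB by (intro sum.cong) auto
  also have "\<dots> = GB n (Suc (n+2)) - GB n 0" by (rule sum_Suc_diff) simp
  also have "\<dots> = 0" by (simp add: GB_def F2_def M0)
  finally have "(\<Sum>k=0..n+2. -8*(real n+1)^2*F2 n k + 4*(7*real n^2+21*real n+16)*F2 (n+1) k + 16*(real n+2)^2*F2 (n+2) k) = 0" .
  hence "-8*(real n+1)^2*(\<Sum>k=0..n+2. F2 n k) + 4*(7*real n^2+21*real n+16)*(\<Sum>k=0..n+2. F2 (n+1) k)
     + 16*(real n+2)^2*(\<Sum>k=0..n+2. F2 (n+2) k) = 0"
    by (simp only: sum.distrib sum_subtractf flip: sum_distrib_left)
  moreover have "(\<Sum>k=0..n+2. F2 n k) = sF n" by (rule sF_ext) simp
  moreover have "(\<Sum>k=0..n+2. F2 (n+1) k) = sF (n+1)" by (rule sF_ext) simp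
  moreover have "(\<Sum>k=0..n+2. F2 (n+2) k) = sF (n+2)" by (rule sF_ext) simp
  ultimately show ?thesis by simp
qed

lemma hR_rec: "(real n+2)^2 * hR (n+2) = (7*real n^2+21*real n+16) * hR (n+1) + 8*(real n+1)^2 * hR n"
proof -
  have r: "-8*(real n+1)^2*sF n + 4*(7*real n^2+21*real n+16)*sF (n+1) + 16*(real n+2)^2*sF (n+2) = 0"
    by (rule sF_rec)
  define p where "p = ((-4)::real)^n"
  have e1: "hR n = p * sF n" unfolding hR_sF p_def ..
  have e2: "hR (n+1) = -4 * p * sF (n+1)" unfolding hR_sF p_def by simp
  have e3: "hR (n+2) = 16 * p * sF (n+2)" unfolding hR_sF p_def by (simp add: power_add)
  show ?thesis unfolding e1 e2 e3 using r by algebra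
qed


lemma fr_hR: "fr n = hR n \<and> fr (Suc n) = hR (Suc n)"
proof (induction n)
  case 0
  have m: "M 0 0 = 1" "M (Suc 0) 0 = 1" "M (Suc 0) (Suc 0) = 6" by (simp_all add: M_def numeral_3_eq_3)
  show ?case unfolding fr_def hR_def by (simp add: m)
next
  case (Suc n)
  have a: "(real n+2)^2 * fr (n+2) = (real n+2)^2 * hR (n+2)"
    using fr_rec[of n] hR_rec[of n] Suc by simp
  have "(real n+2)^2 \<noteq> 0" by (simp add: add_nonneg_eq_0_iff)
  with a have "fr (n+2) = hR (n+2)" by simp
  with Suc show ?case by simp
qed

lemma franel_real: "real (franel n) = fr n"
  unfolding franel_def fr_def by simp

definition T :: "nat \<Rightarrow> nat \<Rightarrow> real" where
  "T n j = real ((2*j) choose j) * real ((3*j+1) choose j) * real ((n+2*j) choose (3*j+1)) * (-4)^(n-1-j)"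

lemma termD:
  assumes jn: "j \<le> n"
  shows "(2*real n+1) * T (n+1) j + 8*real n * T n j = (3*real n+1) * real (M n j) * (-4)^(n-j)"
proof -
  define a where "a = real ((n+2*j) choose (3*j+1))"
  define B where "B = real ((n+2*j) choose (3*j))"
  define X where "X = real ((3*j+1) choose j)"
  define Y where "Y = real ((3*j) choose j)"
  define C2 where "C2 = real ((2*j) choose j)"
  define p where "p = ((-4)::real)^(n-j)"
  have f1: "real ((n+1+2*j) choose (3*j+1)) = a + B"
  proof -
    have "(n+1+2*j) choose (3*j+1) = Suc (n+2*j) choose Suc (3*j)" by simp
    also have "\<dots> = ((n+2*j) choose (3*j)) + ((n+2*j) choose Suc (3*j))" by simp
    finally show ?thesis by (simp add: a_def B_def)
  qed
  have f2: "(3*real j+1)*a = (real n - real j)*B"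
  proof -
    have "((n+2*j) choose Suc (3*j)) * Suc (3*j) = ((n+2*j) choose (3*j)) * (n+2*j - 3*j)"
      by (rule choose_step_nat)
    hence "real (((n+2*j) choose Suc (3*j)) * Suc (3*j)) = real (((n+2*j) choose (3*j)) * (n - j))"
      by simp
    thus ?thesis unfolding a_def B_def of_nat_mult using jn by (simp add: of_nat_diff algebra_simps)
  qed
  have f3: "(2*real j+1)*X = (3*real j+1)*Y"
  proof -
    have "(3*j+1 - j) * ((3*j+1) choose j) = (3*j+1) * ((3*j+1-1) choose j)"
      by (rule binomial_absorb_comp)
    hence "real ((2*j+1) * ((3*j+1) choose j)) = real ((3*j+1) * ((3*j) choose j))" by simp
    thus ?thesis unfolding X_def Y_def of_nat_mult by (simp add: algebra_simps)
  qed
  have f4: "8*real n * T n j = -2*real n*C2*X*a*p"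
  proof (cases "j < n")
    case True
    have "((-4)::real)^(n-j) = (-4)^(n-1-j) * (-4)" using True
      by (metis Suc_diff_Suc diff_Suc_eq_diff_pred power_Suc2)
    thus ?thesis unfolding T_def a_def C2_def X_def p_def by (simp add: algebra_simps)
  next
    case False
    hence "j = n" using jn by simp
    hence "a = 0" "(n+2*j) choose (3*j+1) = 0" by (simp_all add: a_def binomial_eq_0)
    thus ?thesis unfolding T_def by simp
  qed
  have f5: "T (n+1) j = C2*X*(a+B)*p"
    unfolding T_def f1[symmetric] C2_def X_def p_def by simp
  have f6: "real (M n j) = B*C2*Y" unfolding M_def B_def C2_def Y_def by simp
  have nz: "(3*real j+1)*(2*real j+1) \<noteq> 0" by (simp add: add_nonneg_eq_0_iff)
  have "((2*real n+1) * T (n+1) j + 8*real n * T n j) * ((3*real j+1)*(2*real j+1))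
      = ((3*real n+1) * real (M n j) * (-4)^(n-j)) * ((3*real j+1)*(2*real j+1))"
    unfolding f4 f5 f6 p_def[symmetric] using f2 f3 by algebra
  thus ?thesis using nz by simp
qed


definition QR :: "nat \<Rightarrow> real" where "QR n = (\<Sum>j=0..n. T n j)"

lemma QR_step: "(2*real n+1) * QR (n+1) + 8*real n * QR n = (3*real n+1) * hR n"
proof -
  have z: "T (n+1) (n+1) = 0" unfolding T_def by (simp add: binomial_eq_0)
  have "QR (n+1) = (\<Sum>j=0..n. T (n+1) j)" unfolding QR_def using z by simp
  hence "(2*real n+1) * QR (n+1) + 8*real n * QR n = (\<Sum>j=0..n. (2*real n+1) * T (n+1) j + 8*real n * T n j)"
    unfolding QR_def by (simp add: sum.distrib sum_distrib_left)
  also have "\<dots> = (\<Sum>j=0..n. (3*real n+1) * (real (M n j) * (-4)^(n-j)))"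
  proof (rule sum.cong)
    fix j assume "j \<in> {0..n}"
    thus "(2*real n+1) * T (n+1) j + 8*real n * T n j = (3*real n+1) * (real (M n j) * (-4)^(n-j))"
      using termD[of j n] by (simp add: mult.assoc)
  qed simp
  also have "\<dots> = (3*real n+1) * hR n" unfolding hR_def by (simp add: sum_distrib_left)
  finally show ?thesis .
qed

definition SR :: "nat \<Rightarrow> real" where
  "SR n = (\<Sum>k=0..n-1. (3*real k+1) * (-16)^(n-k-1) * real ((2*k) choose k) * fr k)"

lemma SR_step: assumes "n \<ge> 1" shows "SR (n+1) = -16 * SR n + (3*real n+1) * real ((2*n) choose n) * fr n"
proof -
  obtain m where nm: "n = Suc m" using assms by (cases n) auto
  have "SR (n+1) = (\<Sum>k=0..m. (3*real k+1) * (-16)^(n-k) * real ((2*k) choose k) * fr k)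
       + (3*real n+1) * real ((2*n) choose n) * fr n"
    unfolding SR_def nm by simp
  also have "(\<Sum>k=0..m. (3*real k+1) * (-16)^(n-k) * real ((2*k) choose k) * fr k)
     = -16 * SR n"
    unfolding SR_def sum_distrib_left nm
  proof (rule sum.cong)
    fix k assume "k \<in> {0..Suc m - 1}"
    hence "Suc m - k = Suc (m - k)" by auto
    thus "(3*real k+1) * (-16)^(Suc m-k) * real ((2*k) choose k) * fr k
       = -16 * ((3*real k+1) * (-16)^(Suc m-k-1) * real ((2*k) choose k) * fr k)" by simp
  qed simp
  finally show ?thesis .
qed

lemma central_step_nat: "Suc n * ((2*Suc n) choose Suc n) = 2*(2*n+1) * ((2*n) choose n)"
proof -
  have a: "Suc (Suc (2*n)) * ((Suc (2*n)) choose n) = ((2*Suc n) choose Suc n) * Suc n"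
    using Suc_times_binomial_eq[of "Suc (2*n)" n] by simp
  have b: "Suc n * ((Suc (2*n)) choose Suc n) = Suc (2*n) * ((2*n) choose n)"
    by (rule Suc_times_binomial)
  have c: "(Suc (2*n)) choose Suc n = (Suc (2*n)) choose n"
    using binomial_symmetric[of "Suc n" "Suc (2*n)"] by simp
  have "Suc n * ((2*Suc n) choose Suc n) = Suc (Suc (2*n)) * ((Suc (2*n)) choose n)" using a by simp
  also have "\<dots> = 2 * (Suc n * ((Suc (2*n)) choose n))" by simp
  also have "\<dots> = 2 * (Suc (2*n) * ((2*n) choose n))" using b c by simp
  finally show ?thesis by simp
qed

lemma central_step: "real (Suc n) * real ((2*Suc n) choose Suc n) = 2*(2*real n+1) * real ((2*n) choose n)"
proof -
  have "real (Suc n * ((2*Suc n) choose Suc n)) = real (2*(2*n+1) * ((2*n) choose n))"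
    by (simp only: central_step_nat)
  hence "real (Suc n) * real ((2*Suc n) choose Suc n) = real (2*(2*n+1)) * real ((2*n) choose n)"
    by (simp only: of_nat_mult)
  moreover have "real (2*(2*n+1)) = 2*(2*real n+1)" by simp
  ultimately show ?thesis by simp
qed

lemma main_real: assumes "n \<ge> 1" shows "2 * SR n = real n * real ((2*n) choose n) * QR n"
  using assms
proof (induction n rule: nat_induct_at_least)
  case base
  have "QR 1 = 1" unfolding QR_def T_def by (simp add: binomial_eq_0)
  moreover have "SR 1 = 1" unfolding SR_def fr_def by simp
  ultimately show ?case by simp
next
  case (Suc n)
  have q: "(3*real n+1) * hR n = (2*real n+1) * QR (n+1) + 8*real n * QR n" using QR_step by simp
  have "2 * SR (Suc n) = -16 * (2 * SR n) + 2*(3*real n+1) * real ((2*n) choose n) * fr n"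
    using SR_step[OF Suc(1)] by simp
  also have "\<dots> = -16 * (real n * real ((2*n) choose n) * QR n) + 2*real ((2*n) choose n) * ((3*real n+1) * hR n)"
    using Suc(2) fr_hR[of n] by simp
  also have "\<dots> = 2*(2*real n+1) * real ((2*n) choose n) * QR (Suc n)" unfolding q by (simp add: algebra_simps)
  also have "\<dots> = real (Suc n) * real ((2*Suc n) choose Suc n) * QR (Suc n)" using central_step[of n] by simp
  finally show ?case .
qed


definition QI :: "nat \<Rightarrow> int" where
  "QI n = (\<Sum>j=0..n. int ((2*j) choose j) * int ((3*j+1) choose j) * int ((n+2*j) choose (3*j+1)) * (-4)^(n-1-j))"

lemma QR_QI: "QR n = real_of_int (QI n)"
  unfolding QR_def QI_def T_def by simp

lemma even_central: assumes "j > 0" shows "even ((2*j) choose j)"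
proof -
  obtain i where j: "j = Suc i" using assms by (cases j) auto
  have "(2*j) choose j = (Suc (2*i+1)) choose (Suc i)" using j by simp
  also have "\<dots> = ((2*i+1) choose i) + ((2*i+1) choose Suc i)" by simp
  also have "(2*i+1) choose Suc i = (2*i+1) choose i"
    using binomial_symmetric[of "Suc i" "2*i+1"] by simp
  finally show ?thesis by simp
qed

lemma QI_even: assumes "n \<ge> 2" shows "even (QI n)"
  unfolding QI_def
proof (rule dvd_sum)
  fix j assume "j \<in> {0..n}"
  show "2 dvd int ((2*j) choose j) * int ((3*j+1) choose j) * int ((n+2*j) choose (3*j+1)) * (-4)^(n-1-j)"
  proof (cases "j = 0")
    case True
    obtain r where r: "n - 1 = Suc r" using assms by (cases "n-1") auto
    have "(2::int) dvd (-4)^(n-1)" unfolding r by simp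
    thus ?thesis using True by simp
  next
    case False
    hence "2 dvd int ((2*j) choose j)" using even_central by simp
    thus ?thesis by simp
  qed
qed

theorem theorem1p1:
  fixes n :: nat
  assumes "n > 1"
  shows "int (n * (2 * n choose n)) dvd
    (\<Sum>k=0..n-1. (3 * int k + 1) * (-16) ^ (n - k - 1) * int (2 * k choose k) * int (franel k))"
proof -
  define S where "S = (\<Sum>k=0..n-1. (3 * int k + 1) * (-16) ^ (n - k - 1) * int (2 * k choose k) * int (franel k))"
  have SR: "real_of_int S = SR n" unfolding S_def SR_def by (simp add: franel_real)
  have "real_of_int (2*S) = real_of_int (int n * int (2 * n choose n) * QI n)"
    using main_real[of n] assms SR QR_QI[of n] by simp
  hence eq: "2*S = int n * int (2 * n choose n) * QI n" by (simp only: of_int_eq_iff)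
  obtain q where q: "QI n = 2*q" using QI_even[of n] assms by auto
  have "S = int n * int (2 * n choose n) * q" using eq q by simp
  thus ?thesis unfolding S_def by simp
qed

end
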